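(* Let $D$ be a square-free integer, let $\mathbb{Z}[\sqrt{D}]$ denote the ring of integers of $\mathbb{Q}(\sqrt{D})$, let $p$ be a prime integer which is irreducible but not prime in $\mathbb{Z}[\sqrt{D}]$, let $z\in I_p(D)$ and put $k=\lVert z\rVert/p$. For any $a,b,c,d,e,f\in\mathbb{Z}[\sqrt{D}]$, we have that $A(p,z)=BC$ where $B=\begin{pmatrix} a&b\\ c&1-a\end{pmatrix}$ and $C=\begin{pmatrix} d&e\\ f&1-d\end{pmatrix}$ are idempotent matrices if and only if $$p=ad+bf,\quad z(1-a)=kb,\quad \bar z a=pc,\quad zd=pe,\quad \bar z(1-d)=kf.$$
   Context: $\mathbb{Z}[\sqrt{D}]=\{a+b\sqrt{D}:a,b\in\mathbb{Z}\}$ if $D\equiv 2,3 \pmod 4$ and $\{\frac{a+b\sqrt{D}}{2}:a,b\in\mathbb{Z},a\equiv b \pmod 2\}$ if $D\equiv 1\pmod 4$. $\bar z$ denotes the conjugate and $\lVert z\rVert=z\bar z$ the norm. $I_p(D)$ is the set of all non-unit $z\in\mathbb{Z}[\sqrt{D}]$ such that $z\notin\langle p\rangle$ but there exists $m\notin\langle p\rangle$ with $zm\in\langle p\rangle$ (for such $z$, $p$ divides $\lVert z\rVert$). $A(p,z)=\begin{pmatrix} p & z\\ \bar z & \lVert z\rVert/p\end{pmatrix}$. A matrix $M$ is idempotent if $M^2=M$. *)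

theory Defs
  imports "HOL-Analysis.Analysis" "HOL-Computational_Algebra.Squarefree"
begin

text \<open>We realise Q(sqrt D) inside the complex numbers, with a fixed square root of D.\<close>

definition sqrtD :: "int \<Rightarrow> complex" where
  "sqrtD D = (if D \<ge> 0 then complex_of_real (sqrt (real_of_int D))
              else \<i> * complex_of_real (sqrt (real_of_int (- D))))"

definition ZD :: "int \<Rightarrow> complex set" where
  "ZD D = (if D mod 4 = 1
           then {(of_int a + of_int b * sqrtD D) / 2 | a b :: int. a mod 2 = b mod 2}
           else {of_int a + of_int b * sqrtD D | a b :: int. True})"

definition qconj :: "int \<Rightarrow> complex \<Rightarrow> complex" where
  "qconj D z = (THE w. \<exists>x y :: rat. z = of_rat x + of_rat y * sqrtD D
                                   \<and> w = of_rat x - of_rat y * sqrtD D)"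

definition qnorm :: "int \<Rightarrow> complex \<Rightarrow> complex" where
  "qnorm D z = z * qconj D z"

definition ZD_dvd :: "int \<Rightarrow> complex \<Rightarrow> complex \<Rightarrow> bool" where
  "ZD_dvd D x y \<longleftrightarrow> (\<exists>w \<in> ZD D. y = x * w)"

definition ZD_unit :: "int \<Rightarrow> complex \<Rightarrow> bool" where
  "ZD_unit D u \<longleftrightarrow> u \<in> ZD D \<and> (\<exists>w \<in> ZD D. u * w = 1)"

definition ZD_ideal :: "int \<Rightarrow> complex \<Rightarrow> complex set" where
  "ZD_ideal D x = {x * w | w. w \<in> ZD D}"

definition ZD_irreducible :: "int \<Rightarrow> complex \<Rightarrow> bool" where
  "ZD_irreducible D p \<longleftrightarrow> p \<in> ZD D \<and> p \<noteq> 0 \<and> \<not> ZD_unit D p \<and>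
     (\<forall>x \<in> ZD D. \<forall>y \<in> ZD D. p = x * y \<longrightarrow> ZD_unit D x \<or> ZD_unit D y)"

definition ZD_prime :: "int \<Rightarrow> complex \<Rightarrow> bool" where
  "ZD_prime D p \<longleftrightarrow> p \<in> ZD D \<and> p \<noteq> 0 \<and> \<not> ZD_unit D p \<and>
     (\<forall>x \<in> ZD D. \<forall>y \<in> ZD D. ZD_dvd D p (x * y) \<longrightarrow> ZD_dvd D p x \<or> ZD_dvd D p y)"

definition Ip :: "int \<Rightarrow> int \<Rightarrow> complex set" where
  "Ip p D = {z \<in> ZD D. \<not> ZD_unit D z \<and> z \<notin> ZD_ideal D (of_int p) \<and>
     (\<exists>m \<in> ZD D. m \<notin> ZD_ideal D (of_int p) \<and> z * m \<in> ZD_ideal D (of_int p))}"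

definition mat2 :: "'a::zero \<Rightarrow> 'a \<Rightarrow> 'a \<Rightarrow> 'a \<Rightarrow> 'a ^ 2 ^ 2" where
  "mat2 a b c d = (\<chi> i j. if i = 1 then (if j = 1 then a else b) else (if j = 1 then c else d))"

definition idempotent_mat :: "'a::semiring_1 ^ 2 ^ 2 \<Rightarrow> bool" where
  "idempotent_mat M \<longleftrightarrow> M ** M = M"

definition Amat :: "int \<Rightarrow> int \<Rightarrow> complex \<Rightarrow> complex ^ 2 ^ 2" where
  "Amat D p z = mat2 (of_int p) z (qconj D z) (qnorm D z / of_int p)"

end

theory Submission
  imports Defs
begin

lemma mat2_mult: "mat2 a b c d ** mat2 a' b' c' d' = mat2 (a*a'+b*c') (a*b'+b*d') (c*a'+d*c') (c*b'+d*d' :: 'a::semiring_1)"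
  unfolding mat2_def matrix_matrix_mult_def by (simp add: vec_eq_iff forall_2 sum_2)

lemma mat2_eq: "mat2 a b c d = mat2 a' b' c' d' \<longleftrightarrow> a=a' \<and> b=b' \<and> c=c' \<and> (d::'a::zero) = d'"
  unfolding mat2_def by (simp add: vec_eq_iff forall_2)

lemma of_rat_complex: "(of_rat q :: complex) = of_real (of_rat q)"
  by (cases q) (simp add: of_rat_rat)

lemma sqrt_int_rat_square:
  fixes D :: int
  assumes "D \<ge> 0" "sqrt (real_of_int D) \<in> \<rat>"
  shows "\<exists>m::nat. D = int m ^ 2"
proof -
  obtain m n :: nat where n: "n \<noteq> 0" and sq: "\<bar>sqrt (real_of_int D)\<bar> = m / n" and cop: "coprime m n"
    using assms(2) by (rule Rats_abs_nat_div_natE)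
  have "real m = sqrt (real_of_int D) * n" using n sq assms(1) by (simp add: field_simps)
  then have "(real m)^2 = real_of_int D * (real n)^2" using assms(1) by (simp add: power_mult_distrib)
  then have eq: "int m ^ 2 = D * int n ^ 2"
    by (metis of_int_eq_iff of_int_mult of_int_of_nat_eq of_int_power)
  then have "int n ^ 2 dvd int m ^ 2" by simp
  then have "n ^ 2 dvd m ^ 2" by (metis of_nat_dvd_iff of_nat_power)
  then have "n dvd m" by (simp add: dvd_power_iff_le pow_divides_pow_iff)
  with cop have "n dvd 1" by (meson coprime_common_divisor dvd_refl)
  then have "n = 1" by simp
  with eq show ?thesis by auto
qed

lemma sqrtD_irr:
  assumes "squarefree D" "D \<noteq> 1"
  shows "sqrtD D \<noteq> of_rat q"
proof
  assume h: "sqrtD D = of_rat q"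
  consider "D < 0" | "D = 0" | "D > 1" using assms(2) by linarith
  then show False
  proof cases
    case 1
    then have "Im (sqrtD D) = sqrt (real_of_int (- D))" by (simp add: sqrtD_def)
    moreover have "Im (of_rat q :: complex) = 0" by (simp add: of_rat_complex)
    moreover have "sqrt (real_of_int (- D)) > 0" using 1 by simp
    ultimately show False using h by simp
  next
    case 2 then show False using assms(1) by simp
  next
    case 3
    then have "complex_of_real (sqrt (real_of_int D)) = complex_of_real (of_rat q)"
      using h by (simp add: sqrtD_def of_rat_complex)
    then have "sqrt (real_of_int D) = of_rat q" by simp
    then have "sqrt (real_of_int D) \<in> \<rat>" by simp
    then have "\<exists>m::nat. D = int m ^ 2" using 3 by (intro sqrt_int_rat_square) auto
    then obtain m :: nat where m: "D = int m ^ 2" by blast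
    then have "int m dvd 1" using squarefreeD[OF assms(1), of "int m"] by simp
    then have "m = 1" by (metis of_nat_1 of_nat_dvd_iff nat_dvd_1_iff_1)
    with m 3 show False by simp
  qed
qed

lemma rep_unique:
  assumes "squarefree D" "D \<noteq> 1"
    and "(of_rat x :: complex) + of_rat y * sqrtD D = of_rat x' + of_rat y' * sqrtD D"
  shows "x = x' \<and> y = y'"
proof -
  have yy: "y = y'"
  proof (rule ccontr)
    assume "y \<noteq> y'"
    then have "sqrtD D = of_rat ((x' - x) / (y - y'))"
      using assms(3) by (simp add: of_rat_diff of_rat_divide field_simps)
    then show False using sqrtD_irr[OF assms(1,2)] by blast
  qed
  then show ?thesis using assms(3) by simp
qed

lemma qconj_eq:
  assumes "squarefree D" "D \<noteq> 1" "z = of_rat x + of_rat y * sqrtD D"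
  shows "qconj D z = of_rat x - of_rat y * sqrtD D"
  unfolding qconj_def
proof (rule the_equality)
  show "\<exists>x' y'. z = of_rat x' + of_rat y' * sqrtD D \<and> of_rat x - of_rat y * sqrtD D = of_rat x' - of_rat y' * sqrtD D"
    using assms(3) by blast
next
  fix w assume "\<exists>x' y'. z = of_rat x' + of_rat y' * sqrtD D \<and> w = of_rat x' - of_rat y' * sqrtD D"
  then obtain x' y' where "z = of_rat x' + of_rat y' * sqrtD D" "w = of_rat x' - of_rat y' * sqrtD D" by blast
  with rep_unique[OF assms(1,2), of x y x' y'] assms(3) show "w = of_rat x - of_rat y * sqrtD D" by simp
qed

lemma ZD_rep:
  assumes "z \<in> ZD D"
  shows "\<exists>x y. z = of_rat x + of_rat y * sqrtD D"
proof (cases "D mod 4 = 1")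
  case True
  then obtain a b :: int where "z = (of_int a + of_int b * sqrtD D) / 2"
    using assms by (auto simp: ZD_def)
  then have "z = of_rat (of_int a / 2) + of_rat (of_int b / 2) * sqrtD D"
    by (simp add: of_rat_divide add_divide_distrib)
  then show ?thesis by blast
next
  case False
  then obtain a b :: int where "z = of_int a + of_int b * sqrtD D"
    using assms by (auto simp: ZD_def)
  then have "z = of_rat (of_int a) + of_rat (of_int b) * sqrtD D" by simp
  then show ?thesis by blast
qed

lemma qconj_nz:
  assumes "squarefree D" "D \<noteq> 1" "z \<in> ZD D" "z \<noteq> 0"
  shows "qconj D z \<noteq> 0"
proof -
  obtain x y where z: "z = of_rat x + of_rat y * sqrtD D" using ZD_rep[OF assms(3)] by blast
  have q: "qconj D z = of_rat x - of_rat y * sqrtD D" by (rule qconj_eq[OF assms(1,2) z])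
  show ?thesis
  proof
    assume "qconj D z = 0"
    then have e: "of_rat x + of_rat (-y) * sqrtD D = (of_rat 0 :: complex) + of_rat 0 * sqrtD D"
      using q by (simp add: of_rat_minus)
    have "x = 0 \<and> y = 0" using rep_unique[OF assms(1,2) e] by simp
    then show False using z assms(4) by simp
  qed
qed

lemma zero_in_ZD: "0 \<in> ZD D"
  unfolding ZD_def by (auto intro!: exI[of _ 0])

theorem lemma3p1:
  fixes D p :: int and z a b c d e f :: complex
  assumes "squarefree D" and "D \<noteq> 1"
    and "prime p"
    and "ZD_irreducible D (of_int p)" and "\<not> ZD_prime D (of_int p)"
    and "z \<in> Ip p D"
    and "a \<in> ZD D" "b \<in> ZD D" "c \<in> ZD D" "d \<in> ZD D" "e \<in> ZD D" "f \<in> ZD D"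
  shows "(Amat D p z = mat2 a b c (1 - a) ** mat2 d e f (1 - d)
           \<and> idempotent_mat (mat2 a b c (1 - a)) \<and> idempotent_mat (mat2 d e f (1 - d)))
         \<longleftrightarrow>
         (let k = qnorm D z / of_int p in
            of_int p = a * d + b * f \<and> z * (1 - a) = k * b \<and> qconj D z * a = of_int p * c
            \<and> z * d = of_int p * e \<and> qconj D z * (1 - d) = k * f)"
proof -
  have zZ: "z \<in> ZD D" and znot: "z \<notin> ZD_ideal D (of_int p)" using assms(6) by (auto simp: Ip_def)
  have z0: "z \<noteq> 0"
  proof
    assume "z = 0"
    then have "z \<in> ZD_ideal D (of_int p)" unfolding ZD_ideal_def using zero_in_ZD by force
    with znot show False by simp
  qed
  have zb0: "qconj D z \<noteq> 0" by (rule qconj_nz[OF assms(1,2) zZ z0])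
  define P :: complex where "P = of_int p"
  have P0: "P \<noteq> 0" using assms(3) by (simp add: P_def prime_gt_0_int)
  define zb where "zb = qconj D z"
  define k where "k = z * zb / P"
  have k0: "k \<noteq> 0" using P0 z0 zb0 by (simp add: k_def zb_def)
  have N: "z * zb = k * P" using P0 by (simp add: k_def)
  have "(mat2 P z zb k = mat2 a b c (1 - a) ** mat2 d e f (1 - d)
           \<and> mat2 a b c (1 - a) ** mat2 a b c (1 - a) = mat2 a b c (1 - a)
           \<and> mat2 d e f (1 - d) ** mat2 d e f (1 - d) = mat2 d e f (1 - d))
        \<longleftrightarrow> (P = a * d + b * f \<and> z * (1 - a) = k * b \<and> zb * a = P * c
            \<and> z * d = P * e \<and> zb * (1 - d) = k * f)"
    unfolding mat2_mult mat2_eq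
  proof
    assume H: "(P = a * d + b * f \<and> z = a * e + b * (1 - d) \<and> zb = c * d + (1 - a) * f \<and> k = c * e + (1 - a) * (1 - d)) \<and>
    (a * a + b * c = a \<and> a * b + b * (1 - a) = b \<and> c * a + (1 - a) * c = c \<and> c * b + (1 - a) * (1 - a) = 1 - a) \<and>
    d * d + e * f = d \<and> d * e + e * (1 - d) = e \<and> f * d + (1 - d) * f = f \<and> f * e + (1 - d) * (1 - d) = 1 - d"
    then have bc: "b * c = a * (1 - a)" and ef: "e * f = d * (1 - d)"
      by (simp_all add: algebra_simps)
    have h1: "P = a * d + b * f" and h2: "z = a * e + b * (1 - d)" and h3: "zb = c * d + (1 - a) * f"
      and h4: "k = c * e + (1 - a) * (1 - d)" using H by auto
    have "a * z + b * k = e * (a * a + b * c) + b * (1 - d)" unfolding h2 h4 by (simp add: algebra_simps)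
    also have "\<dots> = z" using H h2 by (simp add: algebra_simps)
    finally have "a * z + b * k = z" .
    then have r1: "z * (1 - a) = k * b" by (simp add: algebra_simps)
    have i1: "c * b + (1 - a) * (1 - a) = 1 - a" and i2: "f * e + (1 - d) * (1 - d) = 1 - d"
      and i3: "d * d + e * f = d" using H by auto
    have "c * P + (1 - a) * zb = d * (c * a + (1 - a) * c) + f * (c * b + (1 - a) * (1 - a))"
      unfolding h1 h3 by (simp add: algebra_simps)
    also have "\<dots> = d * c + f * (1 - a)" unfolding i1 by (simp add: algebra_simps)
    also have "\<dots> = zb" unfolding h3 by (simp add: algebra_simps)
    finally have "c * P + (1 - a) * zb = zb" .
    then have r2: "zb * a = P * c" by (simp add: algebra_simps)
    have "P * e + z * (1 - d) = a * (d * e + e * (1 - d)) + b * (f * e + (1 - d) * (1 - d))"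
      unfolding h1 h2 by (simp add: algebra_simps)
    also have "\<dots> = a * e + b * (1 - d)" unfolding i2 by (simp add: algebra_simps)
    finally have "P * e + z * (1 - d) = z" unfolding h2 .
    then have r3: "z * d = P * e" by (simp add: algebra_simps)
    have "zb * d + k * f = c * (d * d + e * f) + (1 - a) * (f * d + (1 - d) * f)"
      unfolding h3 h4 by (simp add: algebra_simps)
    also have "\<dots> = c * d + (1 - a) * f" unfolding i3 by (simp add: algebra_simps)
    finally have "zb * d + k * f = zb" unfolding h3 .
    then have r4: "zb * (1 - d) = k * f" by (simp add: algebra_simps)
    show "P = a * d + b * f \<and> z * (1 - a) = k * b \<and> zb * a = P * c \<and> z * d = P * e \<and> zb * (1 - d) = k * f"
      using h1 r1 r2 r3 r4 by blast
  next
    assume H: "P = a * d + b * f \<and> z * (1 - a) = k * b \<and> zb * a = P * c \<and> z * d = P * e \<and> zb * (1 - d) = k * f"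
    have h1: "P = a * d + b * f" and bk: "b * k = z * (1 - a)" and cP: "c * P = zb * a"
      and eP: "e * P = z * d" and fk: "f * k = zb * (1 - d)" using H by (auto simp: algebra_simps)
    have "k * (b * f * k) = (b * k) * (f * k)" by (simp add: algebra_simps)
    also have "\<dots> = (z * zb) * ((1 - a) * (1 - d))" unfolding bk fk by (simp add: algebra_simps)
    also have "\<dots> = k * (P * (1 - a) * (1 - d))" unfolding N by (simp add: algebra_simps)
    finally have bfk: "b * f * k = P * (1 - a) * (1 - d)" using k0 by simp
    have K: "P * k = a * d * k + P * (1 - a) * (1 - d)"
      using h1 bfk by (metis distrib_right)
    have "P * k * (a * e + b * (1 - d)) = a * k * (e * P) + P * (1 - d) * (b * k)" by (simp add: algebra_simps)
    also have "\<dots> = z * (a * d * k + P * (1 - a) * (1 - d))" unfolding eP bk by (simp add: algebra_simps)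
    also have "\<dots> = P * k * z" unfolding K[symmetric] by (simp add: algebra_simps)
    finally have g1: "z = a * e + b * (1 - d)" using P0 k0 by simp
    have "P * k * (c * d + (1 - a) * f) = d * k * (c * P) + P * (1 - a) * (f * k)" by (simp add: algebra_simps)
    also have "\<dots> = zb * (a * d * k + P * (1 - a) * (1 - d))" unfolding cP fk by (simp add: algebra_simps)
    also have "\<dots> = P * k * zb" unfolding K[symmetric] by (simp add: algebra_simps)
    finally have g2: "zb = c * d + (1 - a) * f" using P0 k0 by simp
    have "P * (P * (c * e)) = (c * P) * (e * P)" by (simp add: algebra_simps)
    also have "\<dots> = (z * zb) * (a * d)" unfolding cP eP by (simp add: algebra_simps)
    also have "\<dots> = P * (k * a * d)" unfolding N by (simp add: algebra_simps)
    finally have ce: "P * (c * e) = k * a * d" using P0 by simp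
    have "P * (c * e + (1 - a) * (1 - d)) = P * k" unfolding K using ce by (simp add: algebra_simps)
    then have g3: "k = c * e + (1 - a) * (1 - d)" using P0 by simp
    have "P * k * (b * c) = (b * k) * (c * P)" by (simp add: algebra_simps)
    also have "\<dots> = (z * zb) * (a * (1 - a))" unfolding bk cP by (simp add: algebra_simps)
    also have "\<dots> = P * k * (a * (1 - a))" unfolding N by (simp add: algebra_simps)
    finally have bc: "b * c = a * (1 - a)" using P0 k0 by simp
    have "P * k * (e * f) = (e * P) * (f * k)" by (simp add: algebra_simps)
    also have "\<dots> = (z * zb) * (d * (1 - d))" unfolding eP fk by (simp add: algebra_simps)
    also have "\<dots> = P * k * (d * (1 - d))" unfolding N by (simp add: algebra_simps)
    finally have ef: "e * f = d * (1 - d)" using P0 k0 by simp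
    show "(P = a * d + b * f \<and> z = a * e + b * (1 - d) \<and> zb = c * d + (1 - a) * f \<and> k = c * e + (1 - a) * (1 - d)) \<and>
    (a * a + b * c = a \<and> a * b + b * (1 - a) = b \<and> c * a + (1 - a) * c = c \<and> c * b + (1 - a) * (1 - a) = 1 - a) \<and>
    d * d + e * f = d \<and> d * e + e * (1 - d) = e \<and> f * d + (1 - d) * f = f \<and> f * e + (1 - d) * (1 - d) = 1 - d"
      using h1 g1 g2 g3 bc ef by (simp add: algebra_simps)
  qed
  then show ?thesis
    unfolding Amat_def idempotent_mat_def qnorm_def Let_def P_def[symmetric] zb_def[symmetric] k_def[symmetric]
    by simp
qed

end
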